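(* Let $(\mathcal X,d)$ be a metric space with $d(x,y)\le1$ for all $x,y\in\mathcal X$, let $f:[n]\to\mathcal X$ be a feature, $1\le k\le n$, and $\mu=\mathbb E_{S\sim\mathcal U_{k,n}}[W(\phi_f^{[n]},\phi_f^S)]$. Then for every $t>0$, $$\mathbb P_{S\sim\mathcal U_{k,n}}\big[W(\phi_f^{[n]},\phi_f^S)\ge\mu+t\big]\le\exp(-t^2k/4).$$
   Context: For nonempty $S\subseteq[n]$, $\phi_f^S=\frac1{|S|}\sum_{i\in S}\delta(f(i))$, with $\delta(\cdot)$ a Dirac mass. $W(\phi,\psi)=\min_{\gamma}\mathbb E_{(x,y)\sim\gamma}[d(x,y)]$ over couplings $\gamma$ of the finitely supported distributions $\phi,\psi$ (Wasserstein-1 distance). $\mathcal U_{k,n}$ is the uniform distribution over size-$k$ subsets of $[n]$. *)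

theory Defs
  imports "HOL-Probability.Probability"
begin

definition empirical :: "(nat \<Rightarrow> 'a) \<Rightarrow> nat set \<Rightarrow> 'a pmf" where
  "empirical f S = map_pmf f (pmf_of_set S)"

definition couplings :: "'a pmf \<Rightarrow> 'b pmf \<Rightarrow> ('a \<times> 'b) pmf set" where
  "couplings p q = {\<gamma>. map_pmf fst \<gamma> = p \<and> map_pmf snd \<gamma> = q}"

definition wasserstein1 :: "'a::metric_space pmf \<Rightarrow> 'a pmf \<Rightarrow> real" where
  "wasserstein1 p q = (INF \<gamma>\<in>couplings p q. measure_pmf.expectation \<gamma> (\<lambda>(x, y). dist x y))"

definition unif_subsets :: "nat \<Rightarrow> nat \<Rightarrow> nat set pmf" where
  "unif_subsets k n = pmf_of_set {S. S \<subseteq> {1..n} \<and> card S = k}"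

end

theory Submission
  imports Defs
begin


definition avg :: "'b set \<Rightarrow> ('b \<Rightarrow> real) \<Rightarrow> real" where
  "avg A F = (\<Sum>x\<in>A. F x) / real (card A)"

definition Sub :: "'b set \<Rightarrow> nat \<Rightarrow> 'b set set" where
  "Sub U j = {S. S \<subseteq> U \<and> card S = j}"

lemma finite_Sub: "finite U \<Longrightarrow> finite (Sub U j)"
  unfolding Sub_def by (auto intro: finite_subset[of _ "Pow U"])

lemma card_Sub: "finite U \<Longrightarrow> card (Sub U j) = card U choose j"
  unfolding Sub_def by (rule n_subsets)

lemma Sub_nonempty: "finite U \<Longrightarrow> j \<le> card U \<Longrightarrow> Sub U j \<noteq> {}"
  using card_Sub[of U j] zero_less_binomial[of j "card U"] by fastforce

lemma hoeff_avg:
  assumes "finite A" "A \<noteq> {}" "\<forall>x\<in>A. h x \<in> {a..a+c}" "l > 0"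
  shows "avg A (\<lambda>x. exp (l * (h x - avg A h))) \<le> exp (l\<^sup>2 * c\<^sup>2 / 8)"
proof -
  interpret interval_bounded_random_variable "measure_pmf (pmf_of_set A)" h a "a+c"
    by unfold_locales (use assms in \<open>auto simp: AE_measure_pmf_iff\<close>)
  have E: "measure_pmf.expectation (pmf_of_set A) h = avg A h"
    using assms by (simp add: integral_pmf_of_set avg_def)
  have "nn_integral (measure_pmf (pmf_of_set A)) (\<lambda>x. exp (l * (h x - avg A h))) \<le> ennreal (exp (l\<^sup>2 * (a + c - a)\<^sup>2 / 8))"
    using Hoeffdings_lemma_nn_integral[OF assms(4)] unfolding E .
  also have "nn_integral (measure_pmf (pmf_of_set A)) (\<lambda>x. exp (l * (h x - avg A h))) 
     = ennreal (avg A (\<lambda>x. exp (l * (h x - avg A h))))"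
    using assms by (simp add: nn_integral_pmf_of_set avg_def ennreal_of_nat_eq_real_of_nat divide_ennreal sum_nonneg card_gt_0_iff)
  finally show ?thesis by (simp add: ennreal_le_iff)
qed

lemma dc:
  assumes "finite U"
  shows "(\<Sum>x\<in>U. \<Sum>S'\<in>Sub (U-{x}) j. F (insert x S')) = real (Suc j) * (\<Sum>S\<in>Sub U (Suc j). F S)"
proof -
  have inner: "(\<Sum>S'\<in>Sub (U-{x}) j. F (insert x S')) = (\<Sum>S\<in>{S. S \<in> Sub U (Suc j) \<and> x \<in> S}. F S)"
    if "x \<in> U" for x
  proof (rule sum.reindex_bij_witness[of _ "\<lambda>S. S - {x}" "insert x"])
    fix S assume "S \<in> {S. S \<in> Sub U (Suc j) \<and> x \<in> S}"
    then show "S - {x} \<in> Sub (U - {x}) j" "insert x (S - {x}) = S"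
      using assms by (auto simp: Sub_def card_Diff_singleton_if intro: finite_subset)
  next
    fix S assume "S \<in> Sub (U - {x}) j"
    moreover have "finite S" using \<open>S \<in> Sub (U - {x}) j\<close> assms finite_subset[of S U] by (auto simp: Sub_def)
    ultimately show "insert x S - {x} = S" "insert x S \<in> {S. S \<in> Sub U (Suc j) \<and> x \<in> S}"
      using assms that by (auto simp: Sub_def card_insert_if)
  qed simp
  have "(\<Sum>x\<in>U. \<Sum>S'\<in>Sub (U-{x}) j. F (insert x S')) = (\<Sum>x\<in>U. \<Sum>S\<in>{S. S \<in> Sub U (Suc j) \<and> x \<in> S}. F S)"
    using inner by simp
  also have "\<dots> = (\<Sum>S\<in>Sub U (Suc j). \<Sum>x\<in>{x. x \<in> U \<and> x \<in> S}. F S)"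
    by (rule sum.swap_restrict) (use assms finite_Sub in auto)
  also have "\<dots> = (\<Sum>S\<in>Sub U (Suc j). real (Suc j) * F S)"
  proof (rule sum.cong)
    fix S assume "S \<in> Sub U (Suc j)"
    then have "{x. x \<in> U \<and> x \<in> S} = S" "card S = Suc j" by (auto simp: Sub_def)
    then show "(\<Sum>x\<in>{x. x \<in> U \<and> x \<in> S}. F S) = real (Suc j) * F S" by simp
  qed simp
  finally show ?thesis by (simp add: sum_distrib_left)
qed

lemma avg_decomp:
  assumes "finite U" "Suc j \<le> card U"
  shows "avg (Sub U (Suc j)) F = avg U (\<lambda>x. avg (Sub (U-{x}) j) (\<lambda>S'. F (insert x S')))"
proof -
  define m where "m = card U"
  have cU: "x \<in> U \<Longrightarrow> card (Sub (U-{x}) j) = (m - 1) choose j" for x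
    using assms by (simp add: card_Sub m_def)
  have m: "m = Suc (m - 1)" using assms m_def by simp
  have cS: "real (card (Sub U (Suc j))) * real (Suc j) = real m * real ((m - 1) choose j)"
    using Suc_times_binomial_eq[of "m-1" j] assms m unfolding card_Sub[OF assms(1)] m_def[symmetric]
    by (metis of_nat_mult)
  have pos: "real ((m - 1) choose j) > 0" using assms m_def by simp
  have "avg U (\<lambda>x. avg (Sub (U-{x}) j) (\<lambda>S'. F (insert x S'))) 
     = (\<Sum>x\<in>U. (\<Sum>S'\<in>Sub (U-{x}) j. F (insert x S'))) / (real m * real ((m - 1) choose j))"
    unfolding avg_def using cU by (simp add: m_def sum_divide_distrib ac_simps)
  also have "\<dots> = real (Suc j) * (\<Sum>S\<in>Sub U (Suc j). F S) / (real (card (Sub U (Suc j))) * real (Suc j))"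
    unfolding dc[OF assms(1)] cS[symmetric] ..
  also have "\<dots> = avg (Sub U (Suc j)) F" by (simp add: avg_def)
  finally show ?thesis ..
qed



definition BD :: "real \<Rightarrow> ('b set \<Rightarrow> real) \<Rightarrow> 'b set \<Rightarrow> nat \<Rightarrow> bool" where
  "BD c g U j \<longleftrightarrow> (\<forall>S\<in>Sub U j. \<forall>x\<in>S. \<forall>y\<in>U-S. \<bar>g S - g (insert y (S - {x}))\<bar> \<le> c)"

lemma avg_mono: "(\<And>x. x \<in> A \<Longrightarrow> F x \<le> G x) \<Longrightarrow> avg A F \<le> avg A G"
  unfolding avg_def by (intro divide_right_mono sum_mono) auto

lemma avg_cmult: "avg A (\<lambda>x. c * F x) = c * avg A F"
  unfolding avg_def by (simp add: sum_distrib_left)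

lemma avg_cong: "(\<And>x. x \<in> A \<Longrightarrow> F x = G x) \<Longrightarrow> avg A F = avg A G"
  unfolding avg_def by simp

definition sw :: "'b \<Rightarrow> 'b \<Rightarrow> 'b set \<Rightarrow> 'b set" where
  "sw x y S = (if y \<in> S then insert x (S - {y}) else S)"

lemma sw_in:
  assumes "finite U" "x \<in> U" "y \<in> U" "S \<in> Sub (U - {x}) j"
  shows "sw x y S \<in> Sub (U - {y}) j"
proof -
  have "finite S" using assms finite_subset[of S U] by (auto simp: Sub_def)
  moreover have "y \<in> S \<Longrightarrow> card S > 0" using \<open>finite S\<close> card_gt_0_iff by blast
  ultimately show ?thesis using assms by (auto simp: Sub_def sw_def card_insert_if)
qed

lemma sw_inv:
  assumes "S \<in> Sub (U - {x}) j"
  shows "sw y x (sw x y S) = S"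
  using assms by (auto simp: Sub_def sw_def)

lemma h_diff:
  assumes U: "finite U" and x: "x \<in> U" and y: "y \<in> U" and j: "Suc j \<le> card U"
    and bd: "BD c g U (Suc j)" and c: "c \<ge> 0"
  shows "avg (Sub (U-{x}) j) (\<lambda>S. g (insert x S)) - avg (Sub (U-{y}) j) (\<lambda>S. g (insert y S)) \<le> c"
proof -
  have cx: "card (Sub (U-{x}) j) = card (Sub (U-{y}) j)"
    using U x y by (simp add: card_Sub)
  have ne: "Sub (U-{x}) j \<noteq> {}" using U x j by (intro Sub_nonempty) auto
  have fin: "finite (Sub (U-{x}) j)" using U by (simp add: finite_Sub)
  have sumeq: "(\<Sum>S\<in>Sub (U-{y}) j. g (insert y S)) = (\<Sum>S\<in>Sub (U-{x}) j. g (insert y (sw x y S)))"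
  proof (rule sum.reindex_bij_witness[of _ "sw x y" "sw y x"])
    fix S assume S: "S \<in> Sub (U - {y}) j"
    show "sw x y (sw y x S) = S" using sw_inv[OF S] .
    show "sw y x S \<in> Sub (U - {x}) j" using sw_in[OF U y x S] .
  next
    fix S assume S: "S \<in> Sub (U - {x}) j"
    show "sw y x (sw x y S) = S" using sw_inv[OF S] .
    show "sw x y S \<in> Sub (U - {y}) j" using sw_in[OF U x y S] .
  next
    fix S assume S: "S \<in> Sub (U - {y}) j"
    show "g (insert y (sw x y (sw y x S))) = g (insert y S)" using sw_inv[OF S] by simp
  qed
  have ineq: "g (insert x S) - g (insert y (sw x y S)) \<le> c" if S: "S \<in> Sub (U-{x}) j" for S
  proof (cases "y \<in> S \<or> x = y")
    case True
    then have "insert y (sw x y S) = insert x S" by (auto simp: sw_def)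
    then show ?thesis using c by simp
  next
    case False
    have fS: "finite S" using S U finite_subset[of S U] by (auto simp: Sub_def)
    have "insert x S \<in> Sub U (Suc j)" using S x fS by (auto simp: Sub_def card_insert_if)
    moreover have "x \<in> insert x S" by simp
    moreover have "y \<in> U - insert x S" using False y S by auto
    ultimately have "\<bar>g (insert x S) - g (insert y (insert x S - {x}))\<bar> \<le> c"
      using bd unfolding BD_def by blast
    moreover have "insert y (insert x S - {x}) = insert y (sw x y S)"
      using False S by (auto simp: sw_def Sub_def)
    ultimately show ?thesis by simp
  qed
  have "(\<Sum>S\<in>Sub (U-{x}) j. g (insert x S)) - (\<Sum>S\<in>Sub (U-{y}) j. g (insert y S))
      = (\<Sum>S\<in>Sub (U-{x}) j. g (insert x S) - g (insert y (sw x y S)))"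
    unfolding sumeq by (simp add: sum_subtractf)
  also have "\<dots> \<le> (\<Sum>S\<in>Sub (U-{x}) j. c)"
    by (rule sum_mono) (rule ineq)
  finally have "(\<Sum>S\<in>Sub (U-{x}) j. g (insert x S)) - (\<Sum>S\<in>Sub (U-{y}) j. g (insert y S))
      \<le> (\<Sum>S\<in>Sub (U-{x}) j. c)" .
  then have "(\<Sum>S\<in>Sub (U-{x}) j. g (insert x S)) - (\<Sum>S\<in>Sub (U-{y}) j. g (insert y S))
      \<le> real (card (Sub (U-{x}) j)) * c" by simp
  moreover have "real (card (Sub (U-{x}) j)) > 0" using fin ne by (simp add: card_gt_0_iff)
  ultimately show ?thesis unfolding avg_def cx[symmetric]
    by (simp add: diff_divide_distrib[symmetric] pos_divide_le_eq mult.commute)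
qed

lemma BD_sub:
  assumes "BD c g U (Suc j)" "x \<in> U" "finite U"
  shows "BD c (\<lambda>S. g (insert x S)) (U - {x}) j"
  unfolding BD_def
proof (intro ballI)
  fix S x' y' assume S: "S \<in> Sub (U - {x}) j" and x': "x' \<in> S" and y': "y' \<in> U - {x} - S"
  have fS: "finite S" using S assms finite_subset[of S U] by (auto simp: Sub_def)
  have "insert x S \<in> Sub U (Suc j)" using S assms fS by (auto simp: Sub_def card_insert_if)
  moreover have "x' \<in> insert x S" using x' by simp
  moreover have "y' \<in> U - insert x S" using y' by auto
  ultimately have "\<bar>g (insert x S) - g (insert y' (insert x S - {x'}))\<bar> \<le> c"
    using assms(1) unfolding BD_def by blast
  moreover have "insert y' (insert x S - {x'}) = insert x (insert y' (S - {x'}))"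
    using S x' by (auto simp: Sub_def)
  ultimately show "\<bar>g (insert x S) - g (insert x (insert y' (S - {x'})))\<bar> \<le> c" by simp
qed

lemma mgf_bound:
  assumes "finite U" "j \<le> card U" "BD c g U j" "l > 0" "c \<ge> 0"
  shows "avg (Sub U j) (\<lambda>S. exp (l * (g S - avg (Sub U j) g))) \<le> exp (l\<^sup>2 * c\<^sup>2 * real j / 8)"
  using assms
proof (induction j arbitrary: U g)
  case 0
  have "S = {}" if "S \<in> Sub U 0" for S
    using that finite_subset[of S U] 0 by (auto simp: Sub_def)
  then have "Sub U 0 = {{}}" by (auto simp: Sub_def)
  then show ?case by (simp add: avg_def)
next
  case (Suc j)
  note U = Suc.prems(1) and j = Suc.prems(2) and bd = Suc.prems(3)
  define h where "h x = avg (Sub (U-{x}) j) (\<lambda>S. g (insert x S))" for x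
  define \<mu> where "\<mu> = avg (Sub U (Suc j)) g"
  define E where "E = exp (l\<^sup>2 * c\<^sup>2 * real j / 8)"
  have mu: "\<mu> = avg U h" unfolding \<mu>_def h_def by (rule avg_decomp[OF U j])
  have IH: "avg (Sub (U-{x}) j) (\<lambda>S. exp (l * (g (insert x S) - h x))) \<le> E" if "x \<in> U" for x
    unfolding h_def E_def
    by (rule Suc.IH) (use U j that Suc.prems BD_sub[OF bd that U] in auto)
  have Une: "U \<noteq> {}" using j by auto
  define a where "a = Min (h ` U)"
  have hr: "\<forall>x\<in>U. h x \<in> {a..a+c}"
  proof
    fix x assume x: "x \<in> U"
    have "a \<in> h ` U" unfolding a_def using U Une by (intro Min_in) auto
    then obtain y where y: "y \<in> U" "a = h y" by auto
    have "h x - h y \<le> c" unfolding h_def by (rule h_diff[OF U x y(1) j bd Suc.prems(5)])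
    moreover have "a \<le> h x" unfolding a_def using U x by (intro Min_le) auto
    ultimately show "h x \<in> {a..a+c}" using y by auto
  qed
  have "avg (Sub U (Suc j)) (\<lambda>S. exp (l * (g S - \<mu>)))
      = avg U (\<lambda>x. avg (Sub (U-{x}) j) (\<lambda>S. exp (l * (g (insert x S) - \<mu>))))"
    by (rule avg_decomp[OF U j])
  also have "\<dots> = avg U (\<lambda>x. exp (l * (h x - \<mu>)) * avg (Sub (U-{x}) j) (\<lambda>S. exp (l * (g (insert x S) - h x))))"
  proof (rule avg_cong)
    fix x
    have "avg (Sub (U-{x}) j) (\<lambda>S. exp (l * (g (insert x S) - \<mu>)))
       = avg (Sub (U-{x}) j) (\<lambda>S. exp (l * (h x - \<mu>)) * exp (l * (g (insert x S) - h x)))"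
      by (rule avg_cong) (simp add: exp_add[symmetric] algebra_simps)
    then show "avg (Sub (U-{x}) j) (\<lambda>S. exp (l * (g (insert x S) - \<mu>)))
       = exp (l * (h x - \<mu>)) * avg (Sub (U-{x}) j) (\<lambda>S. exp (l * (g (insert x S) - h x)))"
      by (simp add: avg_cmult)
  qed
  also have "\<dots> \<le> avg U (\<lambda>x. exp (l * (h x - \<mu>)) * E)"
    by (rule avg_mono) (use IH in \<open>auto intro: mult_left_mono\<close>)
  also have "\<dots> = E * avg U (\<lambda>x. exp (l * (h x - avg U h)))"
    by (simp add: avg_cmult[symmetric] mu mult.commute)
  also have "\<dots> \<le> E * exp (l\<^sup>2 * c\<^sup>2 / 8)"
    using hoeff_avg[OF U Une hr Suc.prems(4)] by (simp add: E_def)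
  also have "\<dots> = exp (l\<^sup>2 * c\<^sup>2 * real (Suc j) / 8)"
    by (simp add: E_def exp_add[symmetric] algebra_simps add_divide_distrib)
  finally show ?case unfolding \<mu>_def .
qed



definition cost :: "('a::metric_space \<times> 'a) pmf \<Rightarrow> real" where
  "cost \<gamma> = measure_pmf.expectation \<gamma> (\<lambda>(x, y). dist x y)"

lemma int_bdd: "(\<And>z. \<bar>F z\<bar> \<le> B) \<Longrightarrow> integrable (measure_pmf M) (F :: _ \<Rightarrow> real)"
  by (rule measure_pmf.integrable_const_bound[where B=B]) auto

lemma cost_nonneg: "cost \<gamma> \<ge> 0"
  unfolding cost_def by (rule integral_nonneg_AE) auto

lemma pair_coupling: "pair_pmf p q \<in> couplings p q"
  unfolding couplings_def by (simp add: map_fst_pair_pmf map_snd_pair_pmf)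

lemma W_le: "\<gamma> \<in> couplings p q \<Longrightarrow> wasserstein1 p q \<le> cost \<gamma>"
  unfolding wasserstein1_def cost_def[symmetric]
  by (rule cINF_lower) (auto intro: bdd_belowI[where m=0] cost_nonneg)

lemma W_ge: "(\<And>\<gamma>. \<gamma> \<in> couplings p q \<Longrightarrow> z \<le> cost \<gamma>) \<Longrightarrow> z \<le> wasserstein1 p q"
  unfolding wasserstein1_def cost_def[symmetric]
  by (rule cINF_greatest) (use pair_coupling in auto)

lemma glue:
  assumes eq: "map_pmf snd pq = map_pmf fst qr"
  shows "\<exists>\<eta>. map_pmf (\<lambda>(a,b,c). (a,b)) \<eta> = pq \<and> map_pmf (\<lambda>(a,b,c). (b,c)) \<eta> = qr"
proof -
  define \<eta> where "\<eta> = bind_pmf pq (\<lambda>xy. bind_pmf (cond_pmf qr {yz. fst yz = snd xy})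
          (\<lambda>yz. return_pmf (fst xy, snd xy, snd yz)))"
  have ne: "set_pmf qr \<inter> {yz. fst yz = snd xy} \<noteq> {}" if "xy \<in> set_pmf pq" for xy
  proof -
    have "snd xy \<in> set_pmf (map_pmf snd pq)" using that by simp
    then have "snd xy \<in> set_pmf (map_pmf fst qr)" using eq by simp
    then show ?thesis by auto
  qed
  have inner: "bind_pmf (cond_pmf qr {yz. fst yz = snd xy}) (\<lambda>yz. return_pmf (fst xy, snd xy, snd yz))
     = map_pmf (\<lambda>yz. (fst xy, snd xy, snd yz)) (cond_pmf qr {yz. fst yz = snd xy})" for xy
    by (simp add: map_pmf_def)
  have 1: "map_pmf (\<lambda>(a,b,c). (a,b)) \<eta> = pq"
  proof -
    have "map_pmf (\<lambda>(a,b,c). (a,b)) \<eta> = bind_pmf pq (\<lambda>xy. map_pmf (\<lambda>yz. xy) (cond_pmf qr {yz. fst yz = snd xy}))"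
      unfolding \<eta>_def map_bind_pmf inner map_pmf_comp by (simp add: case_prod_beta)
    also have "\<dots> = bind_pmf pq return_pmf"
      by (simp add: map_pmf_const)
    finally show ?thesis by (simp add: bind_return_pmf')
  qed
  have "map_pmf (\<lambda>(a,b,c). (b,c)) \<eta> = bind_pmf pq (\<lambda>xy. map_pmf (\<lambda>yz. (snd xy, snd yz)) (cond_pmf qr {yz. fst yz = snd xy}))"
    unfolding \<eta>_def map_bind_pmf inner map_pmf_comp by (simp add: case_prod_beta)
  also have "\<dots> = bind_pmf pq (\<lambda>xy. cond_pmf qr {yz. fst yz = snd xy})"
  proof (rule bind_pmf_cong[OF refl])
    fix xy assume xy: "xy \<in> set_pmf pq"
    show "map_pmf (\<lambda>yz. (snd xy, snd yz)) (cond_pmf qr {yz. fst yz = snd xy}) = cond_pmf qr {yz. fst yz = snd xy}"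
      by (rule map_pmf_idI) (auto simp: set_cond_pmf[OF ne[OF xy]])
  qed
  also have "\<dots> = bind_pmf (map_pmf snd pq) (\<lambda>y. cond_pmf qr {yz. fst yz = y})"
    by (simp add: bind_map_pmf)
  also have "\<dots> = qr"
    unfolding eq by (subst bind_map_pmf, rule bind_cond_pmf_cancel) (auto simp: eq_commute)
  finally show ?thesis using 1 by blast
qed



lemma triangle:
  fixes p q r :: "'a::metric_space pmf"
  assumes d1: "\<forall>x y :: 'a. dist x y \<le> 1"
  shows "wasserstein1 p q \<le> wasserstein1 p r + wasserstein1 r q"
proof -
  have key: "wasserstein1 p q \<le> cost g1 + cost g2" if g1: "g1 \<in> couplings p r" and g2: "g2 \<in> couplings r q" for g1 g2
  proof -
    have "map_pmf snd g1 = map_pmf fst g2" using g1 g2 by (simp add: couplings_def)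
    then obtain \<eta> where e1: "map_pmf (\<lambda>(a,b,c). (a,b)) \<eta> = g1" and e2: "map_pmf (\<lambda>(a,b,c). (b,c)) \<eta> = g2"
      using glue by blast
    define g3 where "g3 = map_pmf (\<lambda>(a,b,c). (a,c)) \<eta>"
    have "map_pmf fst g3 = map_pmf fst g1" unfolding g3_def e1[symmetric] map_pmf_comp
      by (simp add: case_prod_beta)
    moreover have "map_pmf snd g3 = map_pmf snd g2" unfolding g3_def e2[symmetric] map_pmf_comp
      by (simp add: case_prod_beta)
    ultimately have "g3 \<in> couplings p q" using g1 g2 by (simp add: couplings_def)
    then have "wasserstein1 p q \<le> cost g3" by (rule W_le)
    also have "cost g3 = measure_pmf.expectation \<eta> (\<lambda>x. dist (fst x) (snd (snd x)))"
      unfolding cost_def g3_def by (simp add: case_prod_beta)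
    also have "\<dots> \<le> measure_pmf.expectation \<eta> (\<lambda>x. dist (fst x) (fst (snd x)) + dist (fst (snd x)) (snd (snd x)))"
    proof (rule integral_mono)
      have b2: "dist u v \<le> 2" for u v :: 'a using d1[rule_format, of u v] by linarith
      have b3: "dist u v + dist v w \<le> 2" for u v w :: 'a using d1[rule_format, of u v] d1[rule_format, of v w] by linarith
      show "integrable (measure_pmf \<eta>) (\<lambda>x. dist (fst x) (snd (snd x)))"
        by (rule int_bdd[where B=2]) (simp add: b2)
      show "integrable (measure_pmf \<eta>) (\<lambda>x. dist (fst x) (fst (snd x)) + dist (fst (snd x)) (snd (snd x)))"
        by (rule int_bdd[where B=2]) (simp add: b3 add_nonneg_nonneg)
    qed (simp add: dist_triangle)
    also have "\<dots> = measure_pmf.expectation \<eta> (\<lambda>x. dist (fst x) (fst (snd x))) + measure_pmf.expectation \<eta> (\<lambda>x. dist (fst (snd x)) (snd (snd x)))"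
      unfolding case_prod_beta
      by (rule Bochner_Integration.integral_add) (auto intro!: int_bdd[where B=1] simp: d1)
    also have "\<dots> = cost g1 + cost g2"
      unfolding cost_def e1[symmetric] e2[symmetric] by (simp add: case_prod_beta)
    finally show ?thesis .
  qed
  have "wasserstein1 p q - cost g2 \<le> wasserstein1 p r" if g2: "g2 \<in> couplings r q" for g2
    by (rule W_ge) (use key g2 in force)
  then have "wasserstein1 p q - wasserstein1 p r \<le> wasserstein1 r q"
    by (intro W_ge) force
  then show ?thesis by simp
qed

lemma Wswap:
  fixes f :: "nat \<Rightarrow> 'a::metric_space"
  assumes d1: "\<forall>x y :: 'a. dist x y \<le> 1"
    and T: "finite T" "a \<in> T" "b \<notin> T"
  shows "wasserstein1 (empirical f T) (empirical f (insert b (T - {a}))) \<le> 1 / real (card T)"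
proof -
  define \<sigma> where "\<sigma> i = (if i = a then b else i)" for i
  define \<gamma> where "\<gamma> = map_pmf (\<lambda>i. (f i, f (\<sigma> i))) (pmf_of_set T)"
  have Tne: "T \<noteq> {}" using T by auto
  have inj: "inj_on \<sigma> T" using T unfolding \<sigma>_def inj_on_def by auto
  have img: "\<sigma> ` T = insert b (T - {a})" using T unfolding \<sigma>_def by auto
  have "\<gamma> \<in> couplings (empirical f T) (empirical f (insert b (T - {a})))"
    unfolding couplings_def empirical_def \<gamma>_def
    using map_pmf_of_set_inj[OF inj Tne T(1)] img
    by (simp add: map_pmf_comp) (metis map_pmf_comp)
  then have "wasserstein1 (empirical f T) (empirical f (insert b (T - {a}))) \<le> cost \<gamma>" by (rule W_le)
  also have "cost \<gamma> = (\<Sum>i\<in>T. dist (f i) (f (\<sigma> i))) / real (card T)"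
    unfolding cost_def \<gamma>_def using T Tne by (simp add: integral_pmf_of_set)
  also have "(\<Sum>i\<in>T. dist (f i) (f (\<sigma> i))) = dist (f a) (f b) + (\<Sum>i\<in>T - {a}. dist (f i) (f (\<sigma> i)))"
    using T by (simp add: sum.remove \<sigma>_def)
  also have "(\<Sum>i\<in>T - {a}. dist (f i) (f (\<sigma> i))) = 0"
    by (rule sum.neutral) (auto simp: \<sigma>_def)
  finally have "wasserstein1 (empirical f T) (empirical f (insert b (T - {a}))) \<le> dist (f a) (f b) / real (card T)"
    by simp
  moreover have "dist (f a) (f b) / real (card T) \<le> 1 / real (card T)"
    by (rule divide_right_mono) (use d1 in auto)
  ultimately show ?thesis by linarith
qed



theorem lemma2p4:
  fixes f :: "nat \<Rightarrow> 'a::metric_space" and k n :: nat and t :: real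
  assumes "\<forall>x y :: 'a. dist x y \<le> 1"
    and "1 \<le> k" and "k \<le> n" and "t > 0"
  shows "measure_pmf.prob (unif_subsets k n)
           {S. wasserstein1 (empirical f {1..n}) (empirical f S) \<ge>
               measure_pmf.expectation (unif_subsets k n)
                 (\<lambda>S. wasserstein1 (empirical f {1..n}) (empirical f S)) + t}
         \<le> exp (- t\<^sup>2 * real k / 4)"
proof -
  note d1 = assms(1)
  define g where "g S = wasserstein1 (empirical f {1..n}) (empirical f S)" for S
  define K where "K = Sub {1..n} k"
  have unif: "unif_subsets k n = pmf_of_set K" unfolding unif_subsets_def K_def Sub_def ..
  have finK: "finite K" unfolding K_def by (simp add: finite_Sub)
  have neK: "K \<noteq> {}" unfolding K_def using assms by (intro Sub_nonempty) auto
  have kpos: "real k > 0" using assms by simp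
  have bd: "BD (1 / real k) g {1..n} k"
    unfolding BD_def
  proof (intro ballI)
    fix S x y assume S: "S \<in> Sub {1..n} k" and x: "x \<in> S" and y: "y \<in> {1..n} - S"
    define S' where "S' = insert y (S - {x})"
    have fS: "finite S" using S by (auto simp: Sub_def intro: finite_subset)
    have cS: "card S = k" using S by (simp add: Sub_def)
    have cS': "card S' = k" unfolding S'_def using fS x y cS
      by (simp add: card_insert_if) (metis One_nat_def Suc_pred card_gt_0_iff empty_iff)
    have S_back: "insert x (S' - {y}) = S" unfolding S'_def using x y by auto
    have "g S \<le> g S' + wasserstein1 (empirical f S') (empirical f S)"
      unfolding g_def by (rule triangle[OF d1])
    also have "wasserstein1 (empirical f S') (empirical f S) \<le> 1 / real k"
      using Wswap[OF d1, of S' y x f] fS x y cS' S_back unfolding S'_def by auto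
    finally have 1: "g S \<le> g S' + 1 / real k" by simp
    have "g S' \<le> g S + wasserstein1 (empirical f S) (empirical f S')"
      unfolding g_def by (rule triangle[OF d1])
    also have "wasserstein1 (empirical f S) (empirical f S') \<le> 1 / real k"
      using Wswap[OF d1, of S x y f] fS x y cS unfolding S'_def by auto
    finally have 2: "g S' \<le> g S + 1 / real k" by simp
    show "\<bar>g S - g (insert y (S - {x}))\<bar> \<le> 1 / real k" using 1 2 unfolding S'_def by linarith
  qed
  define \<mu> where "\<mu> = avg K g"
  define l where "l = 4 * t * real k"
  have lpos: "l > 0" unfolding l_def using assms kpos by simp
  have mgf: "avg K (\<lambda>S. exp (l * (g S - \<mu>))) \<le> exp (l\<^sup>2 * (1 / real k)\<^sup>2 * real k / 8)"
    unfolding \<mu>_def K_def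
    by (rule mgf_bound[OF _ _ bd lpos]) (use assms in auto)
  have E: "measure_pmf.expectation (unif_subsets k n) g = \<mu>"
    unfolding unif \<mu>_def avg_def using finK neK by (simp add: integral_pmf_of_set)
  define A where "A = {S. g S \<ge> \<mu> + t}"
  have "real (card (K \<inter> A)) = (\<Sum>S\<in>K \<inter> A. 1)" by simp
  also have "\<dots> \<le> (\<Sum>S\<in>K \<inter> A. exp (l * (g S - \<mu> - t)))"
  proof (rule sum_mono)
    fix S assume "S \<in> K \<inter> A"
    then have "l * (g S - \<mu> - t) \<ge> 0" using lpos by (auto simp: A_def)
    then show "1 \<le> exp (l * (g S - \<mu> - t))" by simp
  qed
  also have "\<dots> \<le> (\<Sum>S\<in>K. exp (l * (g S - \<mu> - t)))"
    by (rule sum_mono2) (use finK in auto)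
  also have "\<dots> = exp (- l * t) * (\<Sum>S\<in>K. exp (l * (g S - \<mu>)))"
    by (simp add: sum_distrib_left exp_add[symmetric] algebra_simps)
  finally have "real (card (K \<inter> A)) / real (card K) \<le> exp (- l * t) * avg K (\<lambda>S. exp (l * (g S - \<mu>)))"
    unfolding avg_def using finK neK by (simp add: divide_right_mono)
  also have "\<dots> \<le> exp (- l * t) * exp (l\<^sup>2 * (1 / real k)\<^sup>2 * real k / 8)"
    by (rule mult_left_mono[OF mgf]) simp
  also have "\<dots> = exp (- 2 * t\<^sup>2 * real k)"
    unfolding exp_add[symmetric] l_def using kpos by (simp add: power2_eq_square field_simps)
  also have "\<dots> \<le> exp (- t\<^sup>2 * real k / 4)"
    using kpos by (simp add: mult_nonneg_nonneg)
  finally have main: "real (card (K \<inter> A)) / real (card K) \<le> exp (- t\<^sup>2 * real k / 4)" .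
  have "measure_pmf.prob (unif_subsets k n) A = real (card (K \<inter> A)) / real (card K)"
    unfolding unif using finK neK by (simp add: measure_pmf_of_set)
  then show ?thesis using main E unfolding A_def g_def by simp
qed


end
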